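(* Let $P$ be any prior distribution over $\mathcal F$, let $c>0$, $h\in(0,1)$ and $\delta\in(0,1)$, and set $C=\frac{2h^4c}{1+16h^2c}$. Then with probability at least $1-\delta$ over $S=(z_1,\dots,z_m)\sim\mathcal D^m$, simultaneously for all distributions $Q$ over $\mathcal F$, $$\mathcal L_{\mathcal D}(Q)\;\le\;\hat{\mathcal L}_S(Q)+\frac{c}{m}\sum_{i=1}^m\mathbb E_{f\sim Q}\big[f(z_i)-(1+h)\,\ell_Q(z_i)\big]^2+\frac{4}{Cm}\Big[3\,\mathrm{KL}(Q\|P)+\log\frac1\delta+5\Big].$$
   Context: Let $(\mathcal Z,\Sigma)$ be a measurable space and $\mathcal D$ a probability distribution on $\mathcal Z$. Let $\mathcal F$ be a class of measurable functions $f:\mathcal Z\to\{0,1\}$ (a zero–one loss class), equipped with a $\sigma$-algebra for which $(f,z)\mapsto f(z)$ is jointly measurable; "distributions over $\mathcal F$" are probability measures on this $\sigma$-algebra. A sample $S=(z_1,\dots,z_m)\sim\mathcal D^m$ consists of i.i.d. draws from $\mathcal D$. For $f\in\mathcal F$: $\mathcal L_{\mathcal D}(f)=\mathbb E_{z\sim\mathcal D}f(z)$ and $\hat{\mathcal L}_S(f)=\frac1m\sum_{i=1}^m f(z_i)$. For a distribution $Q$ over $\mathcal F$ and $z\in\mathcal Z$, write $\ell_Q(z)=\mathbb E_{f\sim Q}f(z)$; the Gibbs risk is $\mathcal L_{\mathcal D}(Q)=\mathbb E_{f\sim Q}\mathcal L_{\mathcal D}(f)$ and the Gibbs empirical risk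 is $\hat{\mathcal L}_S(Q)=\frac1m\sum_{i=1}^m\ell_Q(z_i)$. $\mathrm{KL}(Q\|P)$ denotes the relative entropy, equal to $+\infty$ unless $Q\ll P$. The prior $P$ is fixed independently of $S$. The quantity $\frac1m\sum_{i=1}^m\mathbb E_{f\sim Q}[f(z_i)-(1+h)\ell_Q(z_i)]^2$ is called the $h$-flatness of $Q$ with respect to $S$. *)

theory Defs
  imports "HOL-Probability.Probability"
begin

text \<open>Relative entropy KL(Q||P) with values in extended reals (natural logarithm):
  +infinity unless Q is absolutely continuous w.r.t. P and log(dQ/dP) is Q-integrable
  (for probability measures, non-integrability forces the value +infinity, because the
  negative part of g log g is bounded).\<close>
definition KL :: "'a measure \<Rightarrow> 'a measure \<Rightarrow> ereal" where
  "KL Q P = (if absolutely_continuous P Q \<and> integrable Q (entropy_density (exp 1) P Q)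
             then ereal (KL_divergence (exp 1) P Q) else \<infinity>)"

definition gibbs_loss :: "('z \<Rightarrow> real) measure \<Rightarrow> 'z \<Rightarrow> real" where
  "gibbs_loss Q z = (\<integral>f. f z \<partial>Q)"

definition true_risk :: "'z measure \<Rightarrow> ('z \<Rightarrow> real) \<Rightarrow> real" where
  "true_risk D f = (\<integral>z. f z \<partial>D)"

definition gibbs_risk :: "'z measure \<Rightarrow> ('z \<Rightarrow> real) measure \<Rightarrow> real" where
  "gibbs_risk D Q = (\<integral>f. true_risk D f \<partial>Q)"

definition emp_gibbs_risk :: "('z \<Rightarrow> real) measure \<Rightarrow> nat \<Rightarrow> (nat \<Rightarrow> 'z) \<Rightarrow> real" where
  "emp_gibbs_risk Q m S = (1 / real m) * (\<Sum>i<m. gibbs_loss Q (S i))"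

definition flatness :: "real \<Rightarrow> ('z \<Rightarrow> real) measure \<Rightarrow> nat \<Rightarrow> (nat \<Rightarrow> 'z) \<Rightarrow> real" where
  "flatness h Q m S = (1 / real m) *
     (\<Sum>i<m. \<integral>f. (f (S i) - (1 + h) * gibbs_loss Q (S i))\<^sup>2 \<partial>Q)"

end

theory Submission
  imports Defs
begin

lemma DV:
  assumes P: "prob_space P" and Q: "prob_space Q" and sQ: "sets Q = sets P"
    and ac: "absolutely_continuous P Q"
    and ie: "integrable Q (entropy_density (exp 1) P Q)"
    and ym: "y \<in> borel_measurable P" and yb: "\<forall>x\<in>space P. \<bar>y x\<bar> \<le> B"
    and yi: "(\<integral>\<^sup>+x. ennreal (exp (y x)) \<partial>P) \<le> 1"
  shows "(\<integral>x. y x \<partial>Q) \<le> KL_divergence (exp 1) P Q"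
proof -
  interpret P: prob_space P by fact
  interpret Q: prob_space Q by fact
  define e where "e = entropy_density (exp 1) P Q"
  have em: "e \<in> borel_measurable Q" unfolding e_def using sQ
    by (metis measurable_cong_sets measurable_entropy_density)
  have ymQ: "y \<in> borel_measurable Q" using ym sQ by (metis measurable_cong_sets)
  have spQ: "space Q = space P" using sQ by (rule sets_eq_imp_space_eq)
  have G: "density P (RN_deriv P Q) = Q"
    using P.density_RN_deriv[OF ac sQ] .
  have fin: "AE x in P. RN_deriv P Q x \<noteq> \<infinity>"
    using P.RN_deriv_finite[OF Q.sigma_finite_measure_axioms ac sQ] .
  have "(\<integral>\<^sup>+x. ennreal (exp (y x - e x)) \<partial>Q)
      = (\<integral>\<^sup>+x. RN_deriv P Q x * ennreal (exp (y x - e x)) \<partial>P)"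
  proof -
    have "(\<integral>\<^sup>+x. ennreal (exp (y x - e x)) \<partial>Q)
      = (\<integral>\<^sup>+x. ennreal (exp (y x - e x)) \<partial>density P (RN_deriv P Q))" using G by simp
    also have "\<dots> = (\<integral>\<^sup>+x. RN_deriv P Q x * ennreal (exp (y x - e x)) \<partial>P)"
    proof (rule nn_integral_density)
      show "RN_deriv P Q \<in> borel_measurable P" by simp
      have "e \<in> borel_measurable P" unfolding e_def by simp
      then show "(\<lambda>x. ennreal (exp (y x - e x))) \<in> borel_measurable P" using ym by measurable
    qed
    finally show ?thesis .
  qed
  also have "\<dots> \<le> (\<integral>\<^sup>+x. ennreal (exp (y x)) \<partial>P)"
  proof (rule nn_integral_mono_AE)
    show "AE x in P. RN_deriv P Q x * ennreal (exp (y x - e x)) \<le> ennreal (exp (y x))"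
      using fin
    proof eventually_elim
      case (elim x)
      show ?case
      proof (cases "RN_deriv P Q x = 0")
        case True then show ?thesis by simp
      next
        case False
        define r where "r = enn2real (RN_deriv P Q x)"
        have rpos: "r > 0" using False elim unfolding r_def
          by (simp add: enn2real_positive_iff less_top[symmetric] zero_less_iff_neq_zero)
        have RN: "RN_deriv P Q x = ennreal r" using elim unfolding r_def
          by (simp add: less_top)
        have "e x = ln r" unfolding e_def entropy_density_def r_def by (simp add: log_def)
        then have "r * exp (y x - e x) = exp (y x)" using rpos by (simp add: exp_diff)
        then show ?thesis using RN rpos by (simp add: ennreal_mult'[symmetric])
      qed
    qed
  qed
  also have "\<dots> \<le> 1" by fact
  finally have nn: "(\<integral>\<^sup>+x. ennreal (exp (y x - e x)) \<partial>Q) \<le> 1" .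
  have iexpm: "(\<lambda>x. exp (y x - e x)) \<in> borel_measurable Q" using em ymQ by measurable
  have iexp: "integrable Q (\<lambda>x. exp (y x - e x))"
    apply (rule integrableI_bounded)
    subgoal using em ymQ by measurable
    using iexpm nn by (auto simp: top.not_eq_extremum intro: le_less_trans[OF _ ennreal_less_top[of 1]])
  have iexp1: "(\<integral>x. exp (y x - e x) \<partial>Q) \<le> 1"
    using nn by (subst integral_eq_nn_integral) (auto simp: iexp iexpm enn2real_leI)
  have iy: "integrable Q y"
    by (rule Q.integrable_const_bound[where B=B]) (use yb spQ ymQ in auto)
  have ie': "integrable Q e" using ie unfolding e_def .
  have "(\<integral>x. y x - e x \<partial>Q) \<le> (\<integral>x. exp (y x - e x) - 1 \<partial>Q)"
    by (rule integral_mono) (use iy ie' iexp in \<open>auto simp: le_diff_eq intro: order.trans[OF _ exp_ge_add_one_self]\<close>)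
  also have "\<dots> = (\<integral>x. exp (y x - e x) \<partial>Q) - 1"
    using iexp by (simp add: Bochner_Integration.integral_diff Q.prob_space)
  finally have "(\<integral>x. y x \<partial>Q) - (\<integral>x. e x \<partial>Q) \<le> 0"
    using iexp1 iy ie' by (simp add: Bochner_Integration.integral_diff)
  then show ?thesis unfolding KL_divergence_def e_def by simp
qed


lemma prod_ennreal_le_1:
  fixes g :: "'i \<Rightarrow> ennreal"
  assumes "\<And>i. i \<in> I \<Longrightarrow> g i \<le> 1"
  shows "prod g I \<le> 1"
  using assms
proof (induction I rule: infinite_finite_induct)
  case (insert i I)
  then have "g i * prod g I \<le> 1 * 1"
    by (intro mult_mono) auto
  then show ?case using insert by simp
qed auto

lemma bern:
  assumes Dp: "prob_space D" and gm: "g \<in> borel_measurable D"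
    and g01: "\<forall>z\<in>space D. g z \<in> {0,1}" and cond: "t - 1 + exp (-s) \<le> 0"
  shows "(\<integral>\<^sup>+z. ennreal (exp (t * (\<integral>z. g z \<partial>D) - s * g z)) \<partial>D) \<le> 1"
proof -
  interpret D: prob_space D by fact
  define p where "p = (\<integral>z. g z \<partial>D)"
  have ig: "integrable D g"
    by (rule D.integrable_const_bound[where B=1]) (use g01 gm in \<open>auto intro!: AE_I2\<close>)
  have p0: "0 \<le> p" unfolding p_def
    by (rule D.integral_ge_const[OF ig]) (use g01 in \<open>auto intro!: AE_I2\<close>)
  have eq: "exp (t * p - s * g z) = exp (t * p) * (1 - (1 - exp (-s)) * g z)" if "z \<in> space D" for z
    using g01 that by (auto simp: exp_diff exp_minus field_simps)
  have ii: "integrable D (\<lambda>z. exp (t * p) * (1 - (1 - exp (-s)) * g z))"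
    using ig by (intro integrable_mult_right Bochner_Integration.integrable_diff) auto
  have I: "(\<integral>\<^sup>+z. ennreal (exp (t * p - s * g z)) \<partial>D)
      = (\<integral>\<^sup>+z. ennreal (exp (t * p) * (1 - (1 - exp (-s)) * g z)) \<partial>D)"
    by (rule nn_integral_cong) (simp add: eq)
  also have "\<dots> = ennreal (\<integral>z. exp (t * p) * (1 - (1 - exp (-s)) * g z) \<partial>D)"
    by (rule nn_integral_eq_integral[OF ii]) (auto intro!: AE_I2 simp del: exp_diff simp: eq[symmetric])
  finally have I: "(\<integral>\<^sup>+z. ennreal (exp (t * p - s * g z)) \<partial>D)
      = ennreal (\<integral>z. exp (t * p) * (1 - (1 - exp (-s)) * g z) \<partial>D)" .
  have "(\<integral>z. exp (t * p) * (1 - (1 - exp (-s)) * g z) \<partial>D) = exp (t * p) * (1 - (1 - exp (-s)) * p)"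
    using ig by (simp add: Bochner_Integration.integral_diff D.prob_space p_def)
  also have "\<dots> \<le> exp (t * p) * exp (- (1 - exp (-s)) * p)"
  proof (intro mult_left_mono)
    show "1 - (1 - exp (-s)) * p \<le> exp (- (1 - exp (-s)) * p)"
      using exp_ge_add_one_self[of "- (1 - exp (-s)) * p"] by (simp add: algebra_simps)
  qed simp
  also have "\<dots> = exp (p * (t - 1 + exp (-s)))"
    by (simp add: exp_add[symmetric] algebra_simps)
  also have "\<dots> \<le> 1" using p0 cond by (simp add: mult_nonneg_nonpos)
  finally show ?thesis using I unfolding p_def by simp
qed


theorem mainTheorem2:
  fixes D :: "'z measure" and MF :: "('z \<Rightarrow> real) measure"
    and P :: "('z \<Rightarrow> real) measure"
    and m :: nat and c h \<delta> :: real
  assumes D_prob: "prob_space D"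
    and F_meas: "\<forall>f\<in>space MF. f \<in> borel_measurable D"
    and F_01: "\<forall>f\<in>space MF. \<forall>z\<in>space D. f z \<in> {0, 1}"
    and eval_meas: "(\<lambda>(f, z). f z) \<in> borel_measurable (MF \<Otimes>\<^sub>M D)"
    and P_prob: "prob_space P" and P_sets: "sets P = sets MF"
    and m_pos: "m > 0"
    and c_pos: "c > 0"
    and h_pos: "0 < h" and h_lt1: "h < 1"
    and \<delta>_pos: "0 < \<delta>" and \<delta>_lt1: "\<delta> < 1"
  shows "\<exists>A \<in> sets (PiM {..<m} (\<lambda>_. D)).
           measure (PiM {..<m} (\<lambda>_. D)) A \<ge> 1 - \<delta> \<and>
           (\<forall>S\<in>A. \<forall>Q. prob_space Q \<and> sets Q = sets MF \<longrightarrow>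
              (let C = 2 * h ^ 4 * c / (1 + 16 * h\<^sup>2 * c) in
               ereal (gibbs_risk D Q)
                 \<le> ereal (emp_gibbs_risk Q m S + c * flatness h Q m S)
                   + ereal (4 / (C * real m)) * (3 * KL Q P + ereal (ln (1 / \<delta>)) + 5)))"
proof -
  interpret D: prob_space D by fact
  interpret P: prob_space P by fact
  define M where "M = PiM {..<m} (\<lambda>_. D)"
  interpret PS: product_prob_space "\<lambda>_. D" "{..<m}"
    by (simp add: product_prob_space_def product_prob_space_axioms_def product_sigma_finite_def
        D.sigma_finite_measure_axioms D.prob_space_axioms)
  have Mp: "prob_space M" unfolding M_def by (rule prob_space_PiM) (rule D.prob_space_axioms)
  interpret M: prob_space M by fact
  interpret MP: pair_sigma_finite M P
    by (simp add: pair_sigma_finite_def M.sigma_finite_measure_axioms P.sigma_finite_measure_axioms)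
  have spP: "space P = space MF" using P_sets by (rule sets_eq_imp_space_eq)
  define x where "x = c * h^2"
  define t where "t = x / (1 + x)"
  have x_pos: "x > 0" unfolding x_def using c_pos h_pos by simp
  have t_pos: "t > 0" unfolding t_def using x_pos by simp
  have tx: "t * (1 + x) = x" unfolding t_def using x_pos by simp
  have cond: "t - 1 + exp (- x) \<le> 0"
  proof -
    have "exp x \<ge> 1 + x" by simp
    then have "exp (-x) \<le> 1 / (1 + x)" using x_pos
      by (simp add: exp_minus divide_simps)
    also have "1 / (1 + x) = 1 - t" unfolding t_def using x_pos by (simp add: field_simps)
    finally show ?thesis by simp
  qed
  define p where "p = (\<lambda>f. true_risk D f)"
  define Phi where "Phi = (\<lambda>S f. t * (\<Sum>i<m. p f - (1 + x) * f (S i)))"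
  have pm: "p \<in> borel_measurable MF"
    unfolding p_def true_risk_def
    using D.borel_measurable_lebesgue_integral[of "\<lambda>f z. f z" MF] eval_meas by simp
  have p01: "0 \<le> p f \<and> p f \<le> 1" if "f \<in> space MF" for f
  proof -
    have f01: "\<forall>z\<in>space D. f z = 0 \<or> f z = 1" using F_01 that by blast
    have ig: "integrable D f"
      by (rule D.integrable_const_bound[where B=1]) (use f01 F_meas that in \<open>auto intro!: AE_I2\<close>)
    have "AE z in D. 0 \<le> f z" "AE z in D. f z \<le> 1" using f01 by (auto intro!: AE_I2)
    then show ?thesis unfolding p_def true_risk_def
      using D.integral_ge_const[OF ig, of 0] D.integral_le_const[OF ig, of 1] by auto
  qed
  have evi: "(\<lambda>(S, f). f (S i)) \<in> borel_measurable (M \<Otimes>\<^sub>M MF)" if i: "i < m" for i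
  proof -
    have "(\<lambda>q. (snd q, fst q i)) \<in> measurable (M \<Otimes>\<^sub>M MF) (MF \<Otimes>\<^sub>M D)"
    proof -
      have [measurable]: "i \<in> {..<m}" using i by simp
      show ?thesis unfolding M_def by measurable
    qed
    from measurable_comp[OF this eval_meas] show ?thesis
      by (simp add: o_def case_prod_beta')
  qed
  have Phim: "(\<lambda>(S, f). Phi S f) \<in> borel_measurable (M \<Otimes>\<^sub>M MF)"
  proof -
    have e: "(\<lambda>q. p (snd q) - (1 + x) * snd q (fst q i)) \<in> borel_measurable (M \<Otimes>\<^sub>M MF)"
      if "i \<in> {..<m}" for i
    proof -
      have ev: "(\<lambda>q. snd q (fst q i)) \<in> borel_measurable (M \<Otimes>\<^sub>M MF)" using evi[of i] that
        by (simp add: case_prod_beta')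
      show ?thesis
        by (rule borel_measurable_diff[OF measurable_compose[OF measurable_snd pm]
              borel_measurable_times[OF borel_measurable_const ev]])
    qed
    have "(\<lambda>q. t * (\<Sum>i<m. p (snd q) - (1 + x) * snd q (fst q i))) \<in> borel_measurable (M \<Otimes>\<^sub>M MF)"
      by (rule borel_measurable_times[OF borel_measurable_const borel_measurable_sum[OF e]])
    then show ?thesis by (simp add: Phi_def case_prod_beta')
  qed
  have setsMP: "sets (M \<Otimes>\<^sub>M P) = sets (M \<Otimes>\<^sub>M MF)"
    by (rule sets_pair_measure_cong[OF refl P_sets])
  have Phim': "(\<lambda>(S, f). ennreal (exp (Phi S f))) \<in> borel_measurable (M \<Otimes>\<^sub>M P)"
  proof -
    have a: "(\<lambda>q. Phi (fst q) (snd q)) \<in> borel_measurable (M \<Otimes>\<^sub>M MF)" using Phim by (simp add: case_prod_beta')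
    have b: "(\<lambda>r::real. ennreal (exp r)) \<in> borel_measurable borel" by measurable
    have "(\<lambda>q. ennreal (exp (Phi (fst q) (snd q)))) \<in> borel_measurable (M \<Otimes>\<^sub>M MF)"
      using measurable_compose[OF a b] .
    then show ?thesis by (subst measurable_cong_sets[OF setsMP refl]) (simp add: case_prod_beta')
  qed
  define Y where "Y = (\<lambda>S. \<integral>\<^sup>+f. ennreal (exp (Phi S f)) \<partial>P)"
  have Ym[measurable]: "Y \<in> borel_measurable M"
    unfolding Y_def using P.borel_measurable_nn_integral[OF Phim'] by simp
  have Ef: "(\<integral>\<^sup>+S. ennreal (exp (Phi S f)) \<partial>M) \<le> 1" if f: "f \<in> space MF" for f
  proof -
    have "(\<integral>\<^sup>+S. ennreal (exp (Phi S f)) \<partial>M)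
        = (\<integral>\<^sup>+S. (\<Prod>i\<in>{..<m}. (\<lambda>i z. ennreal (exp (t * p f - x * f z))) i (S i)) \<partial>M)"
    proof (rule nn_integral_cong)
      fix S
      have trm: "t * (p f - (1 + x) * v) = t * p f - x * v" for v
      proof -
        have "t * (p f - (1 + x) * v) = t * p f - (t * (1 + x)) * v" by (simp add: algebra_simps)
        then show ?thesis by (simp only: tx)
      qed
      have "exp (Phi S f) = (\<Prod>i<m. exp (t * p f - x * f (S i)))"
        unfolding Phi_def sum_distrib_left trm by (rule exp_sum) simp
      then show "ennreal (exp (Phi S f)) = (\<Prod>i\<in>{..<m}. (\<lambda>i z. ennreal (exp (t * p f - x * f z))) i (S i))"
        by (simp add: prod_ennreal)
    qed
    also have "\<dots> = (\<Prod>i\<in>{..<m}. \<integral>\<^sup>+z. ennreal (exp (t * p f - x * f z)) \<partial>D)"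
      unfolding M_def
      by (rule PS.product_nn_integral_prod) (use F_meas f in auto)
    also have "\<dots> \<le> 1"
    proof (rule prod_ennreal_le_1)
      fix i show "(\<integral>\<^sup>+z. ennreal (exp (t * p f - x * f z)) \<partial>D) \<le> 1"
        unfolding p_def true_risk_def
        by (rule bern[OF D_prob _ _ cond]) (use F_meas F_01 f in auto)
    qed
    finally show ?thesis .
  qed
  have EY: "(\<integral>\<^sup>+S. Y S \<partial>M) \<le> 1"
  proof -
    have "(\<integral>\<^sup>+S. Y S \<partial>M) = (\<integral>\<^sup>+f. (\<integral>\<^sup>+S. ennreal (exp (Phi S f)) \<partial>M) \<partial>P)"
      unfolding Y_def using MP.Fubini'[OF Phim'] by simp
    also have "\<dots> \<le> (\<integral>\<^sup>+f. 1 \<partial>P)"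
      by (rule nn_integral_mono) (use Ef spP in auto)
    also have "\<dots> = 1" by (simp add: P.emeasure_space_1)
    finally show ?thesis .
  qed
  define A where "A = {S \<in> space M. ennreal \<delta> * Y S < 1}"
  have A_sets: "A \<in> sets M" unfolding A_def by measurable
  have compl: "space M - A = {S \<in> space M. 1 \<le> ennreal \<delta> * Y S}"
    unfolding A_def by auto
  have "emeasure M {S \<in> space M. 1 \<le> ennreal \<delta> * Y S} \<le> ennreal \<delta> * (\<integral>\<^sup>+S. Y S * indicator (space M) S \<partial>M)"
    by (rule nn_integral_Markov_inequality) auto
  also have "(\<integral>\<^sup>+S. Y S * indicator (space M) S \<partial>M) = (\<integral>\<^sup>+S. Y S \<partial>M)"
    by (rule nn_integral_cong) auto
  also have "ennreal \<delta> * \<dots> \<le> ennreal \<delta> * 1"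
    using EY by (intro mult_left_mono) auto
  finally have "emeasure M (space M - A) \<le> ennreal \<delta>" using compl by simp
  then have mc: "measure M (space M - A) \<le> \<delta>"
    using \<delta>_pos by (simp add: M.emeasure_eq_measure ennreal_le_iff)
  have mA: "measure M A \<ge> 1 - \<delta>"
    using M.prob_compl[OF A_sets] mc by simp
  have main: "ereal (gibbs_risk D Q)
                 \<le> ereal (emp_gibbs_risk Q m S + c * flatness h Q m S)
                   + ereal (4 / (C * real m)) * (3 * KL Q P + ereal (ln (1 / \<delta>)) + 5)"
    if SA: "S \<in> A" and Qp: "prob_space Q" and Qs: "sets Q = sets MF"
      and C_def: "C = 2 * h ^ 4 * c / (1 + 16 * h\<^sup>2 * c)" for S Q C
  proof -
    interpret Q: prob_space Q by fact
    have SM: "S \<in> space M" and SY: "ennreal \<delta> * Y S < 1" using SA unfolding A_def by auto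
    have Si: "S i \<in> space D" if "i < m" for i
      using SM that unfolding M_def by (auto simp: space_PiM PiE_iff)
    have spQ: "space Q = space MF" using Qs by (rule sets_eq_imp_space_eq)
    have mQ: "measurable Q N = measurable MF N" for N :: "'b measure"
      by (rule measurable_cong_sets[OF Qs refl])
    have mP: "measurable P N = measurable MF N" for N :: "'b measure"
      by (rule measurable_cong_sets[OF P_sets refl])
    have evz: "(\<lambda>f. f z) \<in> borel_measurable MF" if z: "z \<in> space D" for z
      using measurable_comp[OF measurable_Pair2'[OF z] eval_meas] by (simp add: o_def)
    have f01: "f (S i) = 0 \<or> f (S i) = 1" if "f \<in> space MF" "i < m" for f i
      using F_01 Si[OF that(2)] that(1) by blast
    have f01b: "0 \<le> f (S i) \<and> f (S i) \<le> 1" if "f \<in> space MF" "i < m" for f i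
      using f01[OF that] by auto
    have PhiSm: "Phi S \<in> borel_measurable MF"
      using measurable_Pair2[OF Phim SM] by simp
    have Phib: "\<bar>Phi S f\<bar> \<le> t * (real m * (2 + x))" if f: "f \<in> space MF" for f
    proof -
      have "\<bar>p f - (1 + x) * f (S i)\<bar> \<le> 2 + x" if "i \<in> {..<m}" for i
        using p01[OF f] f01[OF f, of i] that x_pos by auto
      then have B: "(\<Sum>i<m. \<bar>p f - (1 + x) * f (S i)\<bar>) \<le> real m * (2 + x)"
        using sum_bounded_above[of "{..<m}" "\<lambda>i. \<bar>p f - (1 + x) * f (S i)\<bar>" "2 + x"] by simp
      have "\<bar>\<Sum>i<m. p f - (1 + x) * f (S i)\<bar> \<le> real m * (2 + x)"
        by (rule order_trans[OF sum_abs B])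
      then show ?thesis unfolding Phi_def using t_pos by (simp add: abs_mult)
    qed
    have x4: "h^4 * c = h^2 * x" unfolding x_def by (simp add: power_def)
    have C_pos: "C > 0" unfolding C_def using h_pos c_pos by (simp add: add_pos_pos)
    show ?thesis
    proof (cases "absolutely_continuous P Q \<and> integrable Q (entropy_density (exp 1) P Q)")
      case False
      then have "KL Q P = \<infinity>" unfolding KL_def by auto
      then show ?thesis using C_pos m_pos by simp
    next
      case True
      define K where "K = KL_divergence (exp 1) P Q"
      have KL: "KL Q P = ereal K" unfolding KL_def K_def using True by simp
      have QsP: "sets Q = sets P" using Qs P_sets by simp
      have DV1: "(\<integral>f. Phi S f + ln \<delta> \<partial>Q) \<le> K"
        unfolding K_def
      proof (rule DV[OF P_prob Qp QsP conjunct1[OF True] conjunct2[OF True], where B="t * (real m * (2 + x)) + \<bar>ln \<delta>\<bar>"])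
        show "(\<lambda>f. Phi S f + ln \<delta>) \<in> borel_measurable P" using PhiSm by (simp add: mP)
        show "\<forall>f\<in>space P. \<bar>Phi S f + ln \<delta>\<bar> \<le> t * (real m * (2 + x)) + \<bar>ln \<delta>\<bar>"
          using Phib spP by (smt (verit))
        have "(\<integral>\<^sup>+f. ennreal (exp (Phi S f + ln \<delta>)) \<partial>P) = (\<integral>\<^sup>+f. ennreal \<delta> * ennreal (exp (Phi S f)) \<partial>P)"
          using \<delta>_pos by (intro nn_integral_cong) (simp add: exp_add ennreal_mult' mult.commute)
        also have "\<dots> = ennreal \<delta> * Y S" unfolding Y_def
          by (rule nn_integral_cmult) (use PhiSm in \<open>simp add: mP\<close>)
        finally show "(\<integral>\<^sup>+f. ennreal (exp (Phi S f + ln \<delta>)) \<partial>P) \<le> 1" using SY by simp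
      qed
      have K0: "0 \<le> K"
      proof -
        have "(\<integral>f. 0 \<partial>Q) \<le> K" unfolding K_def
          by (rule DV[OF P_prob Qp QsP conjunct1[OF True] conjunct2[OF True], where B=0])
             (auto simp: P.emeasure_space_1)
        then show ?thesis by simp
      qed
      define l where "l = (\<lambda>i. gibbs_loss Q (S i))"
      define R where "R = gibbs_risk D Q"
      have ip: "integrable Q p"
        by (rule Q.integrable_const_bound[where B=1]) (use p01 pm spQ in \<open>auto intro!: AE_I2 simp: mQ\<close>)
      have ie: "integrable Q (\<lambda>f. f (S i))" if "i < m" for i
      proof -
        have b: "\<bar>f (S i)\<bar> \<le> 1" if "f \<in> space MF" for f using f01[OF that \<open>i < m\<close>] by auto
        show ?thesis
        by (rule Q.integrable_const_bound[where B=1])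
           (use b evz[OF Si[OF that]] spQ in \<open>auto intro!: AE_I2 simp: mQ\<close>)
      qed
      have l01: "0 \<le> l i \<and> l i \<le> 1" if "i < m" for i
      proof -
        have "AE f in Q. 0 \<le> f (S i)" "AE f in Q. f (S i) \<le> 1"
          using f01b[OF _ that] spQ by (auto intro!: AE_I2)
        then show ?thesis unfolding l_def gibbs_loss_def
          using Q.integral_ge_const[OF ie[OF that], of 0] Q.integral_le_const[OF ie[OF that], of 1] by auto
      qed
      have "(\<integral>f. Phi S f + ln \<delta> \<partial>Q) = t * (\<Sum>i<m. R - (1 + x) * l i) + ln \<delta>"
      proof -
        have i1: "integrable Q (\<lambda>f. p f - (1 + x) * f (S i))" if "i \<in> {..<m}" for i
          using ip ie[of i] that by auto
        have isum: "integrable Q (\<lambda>f. \<Sum>i<m. p f - (1 + x) * f (S i))"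
          by (rule Bochner_Integration.integrable_sum) (use i1 in auto)
        have iPhi: "integrable Q (Phi S)" unfolding Phi_def using isum by simp
        have "(\<integral>f. Phi S f + ln \<delta> \<partial>Q) = (\<integral>f. Phi S f \<partial>Q) + (\<integral>f. ln \<delta> \<partial>Q)"
          by (rule Bochner_Integration.integral_add[OF iPhi]) simp
        also have "(\<integral>f. ln \<delta> \<partial>Q) = ln \<delta>" by (simp add: Q.prob_space)
        also have "(\<integral>f. Phi S f \<partial>Q) = t * (\<integral>f. (\<Sum>i<m. p f - (1 + x) * f (S i)) \<partial>Q)"
          unfolding Phi_def by (rule integral_mult_right_zero)
        also have "(\<integral>f. (\<Sum>i<m. p f - (1 + x) * f (S i)) \<partial>Q) = (\<Sum>i<m. (\<integral>f. p f - (1 + x) * f (S i) \<partial>Q))"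
          by (rule Bochner_Integration.integral_sum) (use i1 in auto)
        also have "(\<Sum>i<m. (\<integral>f. p f - (1 + x) * f (S i) \<partial>Q)) = (\<Sum>i<m. R - (1 + x) * l i)"
          using ip ie by (intro sum.cong refl)
            (simp add: Bochner_Integration.integral_diff R_def l_def gibbs_risk_def gibbs_loss_def p_def)
        finally show ?thesis .
      qed
      with DV1 have DV2: "t * (real m * R - (1 + x) * (\<Sum>i<m. l i)) + ln \<delta> \<le> K"
        by (simp add: sum_subtractf sum_distrib_left)
      have flat_i: "(\<integral>f. (f (S i) - (1 + h) * gibbs_loss Q (S i))\<^sup>2 \<partial>Q) \<ge> h^2 * l i" if i: "i < m" for i
      proof -
        define k where "k = 1 + h"
        have "(\<integral>f. (f (S i) - k * l i)\<^sup>2 \<partial>Q) = (\<integral>f. f (S i) * (1 - 2 * k * l i) + k^2 * (l i)^2 \<partial>Q)"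
          by (rule Bochner_Integration.integral_cong[OF refl])
             (use f01[OF _ i] spQ in \<open>auto simp: power2_eq_square algebra_simps\<close>)
        also have "\<dots> = l i * (1 - 2 * k * l i) + k^2 * (l i)^2"
          using ie[OF i] by (simp add: Q.prob_space l_def gibbs_loss_def)
        also have "\<dots> = h^2 * l i + (1 - h^2) * (l i - (l i)^2)"
          unfolding k_def by (simp add: algebra_simps power2_eq_square)
        also have "\<dots> \<ge> h^2 * l i"
        proof -
          have "(l i)^2 \<le> l i" using l01[OF i] by (simp add: power2_eq_square mult_left_le)
          moreover have "h^2 \<le> 1" using h_pos h_lt1 by (simp add: power_le_one)
          ultimately show ?thesis by simp
        qed
        finally show ?thesis unfolding k_def l_def .
      qed
      define SL where "SL = (\<Sum>i<m. l i)"
      have SL0: "0 \<le> SL" unfolding SL_def by (intro sum_nonneg) (use l01 in auto)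
      have flat: "c * flatness h Q m S \<ge> x * SL / real m"
      proof -
        have "(\<Sum>i<m. h^2 * l i) \<le> (\<Sum>i<m. (\<integral>f. (f (S i) - (1 + h) * gibbs_loss Q (S i))\<^sup>2 \<partial>Q))"
          using flat_i by (intro sum_mono) auto
        then have "h^2 * SL \<le> (\<Sum>i<m. (\<integral>f. (f (S i) - (1 + h) * gibbs_loss Q (S i))\<^sup>2 \<partial>Q))"
          unfolding SL_def by (simp add: sum_distrib_left)
        then have "c * (h^2 * SL) / real m \<le> c * flatness h Q m S"
          unfolding flatness_def using c_pos m_pos by (simp add: divide_right_mono)
        then show ?thesis unfolding x_def by (simp add: mult.assoc)
      qed
      have emp: "emp_gibbs_risk Q m S = SL / real m"
        unfolding emp_gibbs_risk_def SL_def l_def by simp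
      have mpos: "real m > 0" using m_pos by simp
      have Rb: "R \<le> (1 + x) * SL / real m + (K - ln \<delta>) / (t * real m)"
      proof -
        have "t * real m * R \<le> (1 + x) * t * SL + (K - ln \<delta>)"
          using DV2 unfolding SL_def by (simp add: algebra_simps)
        then have "R \<le> ((1 + x) * t * SL + (K - ln \<delta>)) / (t * real m)"
          using t_pos mpos by (simp add: pos_le_divide_eq mult.commute)
        also have "\<dots> = (1 + x) * SL / real m + (K - ln \<delta>) / (t * real m)"
          using t_pos mpos by (simp add: add_divide_distrib)
        finally show ?thesis .
      qed
      have q1: "1 / t \<le> 4 / C"
      proof -
        have "1 / t = (1 + x) / x" unfolding t_def by simp
        also have "\<dots> \<le> 2 * (1 + 16 * x) / (h^2 * x)"
        proof -
          have "h^2 \<le> 1" using h_pos h_lt1 by (simp add: power_le_one)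
          then have "h^2 * (1 + x) \<le> 2 * (1 + 16 * x)" using x_pos
            by (smt (verit) mult_left_le_one_le zero_le_power2)
          then show ?thesis using x_pos h_pos
            by (simp add: divide_simps) (simp add: algebra_simps)
        qed
        also have "\<dots> = 4 / C" unfolding C_def using x4 x_pos h_pos c_pos
          by (simp add: x_def field_simps power2_eq_square power4_eq_xxxx)
        finally show ?thesis .
      qed
      have "ln \<delta> < 0" using \<delta>_pos \<delta>_lt1 by simp
      then have W0: "0 \<le> K - ln \<delta>" using K0 by simp
      have Wb: "(K - ln \<delta>) / (t * real m) \<le> 4 / (C * real m) * (3 * K + ln (1 / \<delta>) + 5)"
      proof -
        have "(K - ln \<delta>) / (t * real m) = (1 / t) * (K - ln \<delta>) / real m" by simp
        also have "\<dots> \<le> (4 / C) * (K - ln \<delta>) / real m"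
          using q1 W0 mpos by (intro divide_right_mono mult_right_mono) auto
        also have "\<dots> \<le> (4 / C) * (3 * K + ln (1 / \<delta>) + 5) / real m"
          using K0 C_pos mpos \<delta>_pos by (intro divide_right_mono mult_left_mono) (auto simp: ln_div)
        finally show ?thesis by simp
      qed
      have fin: "R \<le> SL / real m + c * flatness h Q m S + 4 / (C * real m) * (3 * K + ln (1 / \<delta>) + 5)"
        using Rb Wb flat by (simp add: add_divide_distrib distrib_right)
      show ?thesis unfolding KL emp using fin unfolding R_def by simp
    qed
  qed
  show ?thesis
    unfolding M_def[symmetric]
    using A_sets mA main by (auto simp: Let_def)
qed

end
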